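(* Let $f_1,\dots,f_N:\mathbb{R}^n\to\mathbb{R}$ satisfy the standing assumptions below, let $\Phi(x)=\max_{1\le j\le N}f_j(x)$, let $x_k\in\mathbb{R}^n$, let $G\in\mathbb{R}^{N\times n}$ be the matrix whose $j$-th row is $\nabla f_j(x_k)^T$, and let $f=(f_1(x_k),\dots,f_N(x_k))^T$. If $\lambda$ is a solution of $$\min_{\lambda}\left(\tfrac12\lambda^TGG^T\lambda-f^T\lambda\right)\quad\text{s.t.}\quad \sum_{i=1}^N\lambda_i=1,\ \lambda_i\ge 0,$$ and $p=-G^T\lambda$, then $\Phi'(x_k;p)\le -\tfrac12\|p\|^2$.
   Context: Standing assumptions: (H1) there is $M\in\mathbb{R}$ with $f_j(x)\ge M$ for all $x$ and $j$; (H2) each $f_j\in C^1(\mathbb{R}^n)$ and there is a modulus of continuity $w$ (increasing $w:[0,\infty)\to[0,\infty)$, $w(0)=0$, continuous at $0$) with $\|\nabla f_j(x)-\nabla f_j(y)\|\le w(\|x-y\|)$ for all $x,y$ and $j$. For $g:\mathbb{R}^n\to\mathbb{R}$, the directional derivative is $g'(x;d)=\lim_{t\to0^+}\frac{g(x+td)-g(x)}{t}$ (for $\Phi$ this limit exists for every $x,d$). *)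

theory Defs
  imports "HOL-Analysis.Analysis"
begin

definition max_fun :: "nat \<Rightarrow> (nat \<Rightarrow> 'a \<Rightarrow> real) \<Rightarrow> 'a \<Rightarrow> real" where
  "max_fun N f x = Max ((\<lambda>j. f j x) ` {1..N})"

definition simplex_feasible :: "nat \<Rightarrow> (nat \<Rightarrow> real) \<Rightarrow> bool" where
  "simplex_feasible N lam \<longleftrightarrow> (\<Sum>i=1..N. lam i) = 1 \<and> (\<forall>i\<in>{1..N}. lam i \<ge> 0)"

text \<open>QP objective 1/2 lam^T G G^T lam - f^T lam, where the j-th row of G is
  the gradient g j (at x_k) and the j-th entry of f is fv j (= f_j(x_k)).
  (G G^T)_{ij} = g i \<bullet> g j.\<close>
definition qp_obj :: "nat \<Rightarrow> (nat \<Rightarrow> 'a::real_inner) \<Rightarrow> (nat \<Rightarrow> real) \<Rightarrow> (nat \<Rightarrow> real) \<Rightarrow> real" where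
  "qp_obj N g fv lam =
     1/2 * (\<Sum>i=1..N. \<Sum>j=1..N. lam i * (g i \<bullet> g j) * lam j) - (\<Sum>j=1..N. fv j * lam j)"

definition GT_mult :: "nat \<Rightarrow> (nat \<Rightarrow> 'a::real_vector) \<Rightarrow> (nat \<Rightarrow> real) \<Rightarrow> 'a" where
  "GT_mult N g lam = (\<Sum>j=1..N. lam j *\<^sub>R g j)"

end

theory Submission imports Defs "HOL-Analysis.Analysis" begin


lemma line_deriv:
  fixes f :: "'a::euclidean_space \<Rightarrow> real"
  assumes "GDERIV f x :> D"
  shows "((\<lambda>t. (f (x + t *\<^sub>R p) - f x) / t) \<longlongrightarrow> p \<bullet> D) (at_right 0)"
proof -
  have d1: "((\<lambda>t. x + t *\<^sub>R p) has_derivative (\<lambda>t. t *\<^sub>R p)) (at 0)"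
    by (auto intro!: derivative_eq_intros)
  have d2: "(f has_derivative (\<lambda>h. h \<bullet> D)) (at (x + 0 *\<^sub>R p))"
    using assms by (simp add: gderiv_def)
  have "((\<lambda>t. f (x + t *\<^sub>R p)) has_derivative (\<lambda>t. (t *\<^sub>R p) \<bullet> D)) (at 0)"
    using has_derivative_compose[OF d1 d2] by (simp add: o_def)
  moreover have "(\<lambda>t. (t *\<^sub>R p) \<bullet> D) = (*) (p \<bullet> D)"
    by (auto simp: fun_eq_iff)
  ultimately have "DERIV (\<lambda>t. f (x + t *\<^sub>R p)) 0 :> p \<bullet> D"
    by (simp add: has_field_derivative_def)
  then have "((\<lambda>t. (f (x + t *\<^sub>R p) - f x) / t) \<longlongrightarrow> p \<bullet> D) (at 0)"
    by (simp add: DERIV_def)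
  then show ?thesis by (rule filterlim_mono) (auto simp: at_le)
qed

lemma tendsto_Max_finite:
  fixes h :: "nat \<Rightarrow> real \<Rightarrow> real"
  assumes "finite S" "S \<noteq> {}" "\<And>j. j \<in> S \<Longrightarrow> (h j \<longlongrightarrow> c j) F"
  shows "((\<lambda>t. Max ((\<lambda>j. h j t) ` S)) \<longlongrightarrow> Max (c ` S)) F"
  using assms
proof (induction S rule: finite_ne_induct)
  case (singleton x)
  then show ?case by simp
next
  case (insert x S)
  have "((\<lambda>t. max (h x t) (Max ((\<lambda>j. h j t) ` S))) \<longlongrightarrow> max (c x) (Max (c ` S))) F"
    using insert by (intro tendsto_max) auto
  then show ?case using insert by simp
qed

lemma Max_shift_div:
  fixes a :: "nat \<Rightarrow> real"
  assumes "finite A" "A \<noteq> {}" "t > 0"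
  shows "Max ((\<lambda>j. (a j - c) / t) ` A) = (Max (a ` A) - c) / t"
  using assms
proof (induction A rule: finite_ne_induct)
  case (singleton x) then show ?case by simp
next
  case (insert x A)
  have "max ((a x - c) / t) ((Max (a ` A) - c) / t) = (max (a x) (Max (a ` A)) - c) / t"
    using insert(5) by (auto simp: max_def divide_right_mono divide_le_cancel)
  then show ?case using insert by simp
qed

lemma Max_restrict:
  fixes h :: "nat \<Rightarrow> real"
  assumes "finite S" "A \<subseteq> S" "A \<noteq> {}" "\<And>j. j \<in> S - A \<Longrightarrow> \<exists>i\<in>A. h j \<le> h i"
  shows "Max (h ` S) = Max (h ` A)"
proof (rule antisym)
  have fA: "finite A" using assms finite_subset by blast
  show "Max (h ` S) \<le> Max (h ` A)"
  proof (subst Max_le_iff)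
    show "finite (h ` S)" "h ` S \<noteq> {}" using assms by auto
    show "\<forall>a\<in>h ` S. a \<le> Max (h ` A)"
    proof
      fix a assume "a \<in> h ` S"
      then obtain j where j: "j \<in> S" "a = h j" by auto
      show "a \<le> Max (h ` A)"
      proof (cases "j \<in> A")
        case True then show ?thesis using j fA by auto
      next
        case False
        then obtain i where "i \<in> A" "h j \<le> h i" using assms(4) j by blast
        then show ?thesis using j fA by (meson Max_ge finite_imageI image_eqI order_trans)
      qed
    qed
  qed
  show "Max (h ` A) \<le> Max (h ` S)"
    using assms fA by (intro Max_mono) auto
qed

lemma qp_obj_eq:
  "qp_obj N g fv lam = 1/2 * (GT_mult N g lam \<bullet> GT_mult N g lam) - (\<Sum>j=1..N. fv j * lam j)"
  by (simp add: qp_obj_def GT_mult_def inner_sum_left inner_sum_right sum_distrib_left algebra_simps inner_commute)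


lemma kkt_ineq:
  fixes g :: "nat \<Rightarrow> 'a::real_inner"
  assumes feas: "simplex_feasible N lam"
    and opt: "\<And>mu. simplex_feasible N mu \<Longrightarrow> qp_obj N g fv lam \<le> qp_obj N g fv mu"
    and j: "j \<in> {1..N}"
  shows "GT_mult N g lam \<bullet> g j - GT_mult N g lam \<bullet> GT_mult N g lam - fv j + (\<Sum>i=1..N. fv i * lam i) \<ge> 0"
proof -
  define v where "v = GT_mult N g lam"
  define F where "F = (\<Sum>i=1..N. fv i * lam i)"
  define A where "A = v \<bullet> g j - v \<bullet> v - fv j + F"
  define w where "w = g j - v"
  have key: "0 \<le> A + 1/2 * t * (w \<bullet> w)" if t: "0 < t" "t \<le> 1" for t
  proof -
    define mu where "mu = (\<lambda>i. (1 - t) * lam i + t * (if i = j then 1 else 0))"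
    have s1: "(\<Sum>i=1..N. mu i) = 1"
      using feas j by (simp add: mu_def sum.distrib simplex_feasible_def sum_distrib_left[symmetric])
    have "simplex_feasible N mu"
      using s1 feas t by (auto simp: simplex_feasible_def mu_def)
    then have le: "qp_obj N g fv lam \<le> qp_obj N g fv mu" by (rule opt)
    have dl: "(\<Sum>i=1..N. (t * (if i = j then 1 else 0)) *\<^sub>R g i) = t *\<^sub>R g j"
    proof -
      have "(\<Sum>i=1..N. (t * (if i = j then 1 else 0)) *\<^sub>R g i) = (\<Sum>i=1..N. if i = j then t *\<^sub>R g j else 0)"
        by (rule sum.cong) auto
      then show ?thesis using j by (simp add: sum.delta)
    qed
    have gm: "GT_mult N g mu = (1 - t) *\<^sub>R v + t *\<^sub>R g j"
      using j dl by (simp add: GT_mult_def mu_def v_def scaleR_add_left sum.distrib scaleR_sum_right if_distrib[of "\<lambda>x. x *\<^sub>R _"] cong: if_cong)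
    have fd: "(\<Sum>i=1..N. fv i * (t * (if i = j then 1 else 0))) = t * fv j"
    proof -
      have "(\<Sum>i=1..N. fv i * (t * (if i = j then 1 else 0))) = (\<Sum>i=1..N. if i = j then t * fv j else 0)"
        by (rule sum.cong) auto
      then show ?thesis using j by (simp add: sum.delta)
    qed
    have "(\<Sum>i=1..N. fv i * mu i) = (\<Sum>i=1..N. (1 - t) * (fv i * lam i)) + (\<Sum>i=1..N. fv i * (t * (if i = j then 1 else 0)))"
      unfolding mu_def sum.distrib[symmetric] by (rule sum.cong) (auto simp: algebra_simps)
    then have fm: "(\<Sum>i=1..N. fv i * mu i) = (1 - t) * F + t * fv j"
      using fd by (simp add: F_def sum_distrib_left[symmetric])
    have gm2: "GT_mult N g mu = v + t *\<^sub>R w"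
      unfolding gm w_def by (simp add: algebra_simps)
    have "1/2 * (v \<bullet> v) - F \<le> 1/2 * ((v + t *\<^sub>R w) \<bullet> (v + t *\<^sub>R w)) - ((1 - t) * F + t * fv j)"
      using le unfolding qp_obj_eq gm2 fm by (simp add: v_def F_def)
    also have "(v + t *\<^sub>R w) \<bullet> (v + t *\<^sub>R w) = v \<bullet> v + 2 * t * (v \<bullet> w) + t * t * (w \<bullet> w)"
      by (simp add: inner_add_left inner_add_right inner_commute algebra_simps)
    finally have "0 \<le> t * (v \<bullet> w - fv j + F) + 1/2 * t * t * (w \<bullet> w)"
      by (simp add: algebra_simps)
    then have "0 \<le> t * (v \<bullet> w - fv j + F + 1/2 * t * (w \<bullet> w))"
      by (simp add: algebra_simps)
    then have "0 \<le> v \<bullet> w - fv j + F + 1/2 * t * (w \<bullet> w)"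
      using t by (simp add: zero_le_mult_iff)
    moreover have "v \<bullet> w = v \<bullet> g j - v \<bullet> v" by (simp add: w_def inner_diff_right)
    ultimately show ?thesis by (simp add: A_def)
  qed
  show ?thesis
  proof (rule ccontr)
    assume "\<not> ?thesis"
    then have An: "A < 0" by (simp add: A_def v_def F_def)
    define t where "t = min 1 (- A / (w \<bullet> w + 1))"
    have ww: "w \<bullet> w \<ge> 0" by simp
    have "- A / (w \<bullet> w + 1) > 0" proof (rule divide_pos_pos)
      show "0 < - A" using An by linarith
      show "0 < w \<bullet> w + 1" using ww by linarith
    qed
    then have t0: "0 < t" by (simp add: t_def)
    have t1: "t \<le> 1" by (simp add: t_def)
    have "t * (w \<bullet> w) \<le> (- A / (w \<bullet> w + 1)) * (w \<bullet> w)"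
      using ww by (intro mult_right_mono) (auto simp: t_def)
    also have "\<dots> \<le> - A"
    proof -
      have q: "(w \<bullet> w) / (w \<bullet> w + 1) \<le> 1" using ww by (smt (verit) divide_le_eq_1)
      have "(- A / (w \<bullet> w + 1)) * (w \<bullet> w) = - A * ((w \<bullet> w) / (w \<bullet> w + 1))" by simp
      also have "\<dots> \<le> - A * 1" using q An by (intro mult_left_mono) auto
      finally show ?thesis by simp
    qed
    finally have "1/2 * t * (w \<bullet> w) < - A" using An by linarith
    with key[OF t0 t1] show False by linarith
  qed
qed

theorem theorem2:
  fixes N :: nat
    and f :: "nat \<Rightarrow> 'a::euclidean_space \<Rightarrow> real"
    and df :: "nat \<Rightarrow> 'a \<Rightarrow> 'a"
    and M :: real
    and w :: "real \<Rightarrow> real"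
    and xk :: 'a
    and lam :: "nat \<Rightarrow> real"
  assumes N: "N \<ge> 1"
    and H1: "\<And>j x. j \<in> {1..N} \<Longrightarrow> f j x \<ge> M"
    and grad: "\<And>j x. j \<in> {1..N} \<Longrightarrow> GDERIV (f j) x :> df j x"
    and w_mono: "mono_on {0..} w"
    and w_nonneg: "\<And>t. t \<ge> 0 \<Longrightarrow> w t \<ge> 0"
    and w0: "w 0 = 0"
    and w_cont: "continuous (at 0 within {0..}) w"
    and H2: "\<And>j x y. j \<in> {1..N} \<Longrightarrow> norm (df j x - df j y) \<le> w (norm (x - y))"
    and lam_feas: "simplex_feasible N lam"
    and lam_opt: "\<And>mu. simplex_feasible N mu \<Longrightarrow>
                    qp_obj N (\<lambda>j. df j xk) (\<lambda>j. f j xk) lam \<le> qp_obj N (\<lambda>j. df j xk) (\<lambda>j. f j xk) mu"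
  shows "let p = - GT_mult N (\<lambda>j. df j xk) lam in
         \<exists>L. ((\<lambda>t. (max_fun N f (xk + t *\<^sub>R p) - max_fun N f xk) / t) \<longlongrightarrow> L) (at_right 0)
             \<and> L \<le> - (1/2) * (norm p)^2"
proof -
  define g where "g = (\<lambda>j. df j xk)"
  define v where "v = GT_mult N g lam"
  define p where "p = - v"
  define S where "S = {1..N::nat}"
  define Phi0 where "Phi0 = max_fun N f xk"
  define A where "A = {j\<in>S. f j xk = Phi0}"
  define F where "F = (\<Sum>i=1..N. f i xk * lam i)"
  have fS: "finite S" and neS: "S \<noteq> {}" using N by (auto simp: S_def)
  have Phi_def': "\<And>y. max_fun N f y = Max ((\<lambda>j. f j y) ` S)" by (simp add: max_fun_def S_def)
  have Phi0_in: "Phi0 \<in> (\<lambda>j. f j xk) ` S" unfolding Phi0_def Phi_def' using fS neS by (intro Max_in) auto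
  then have neA: "A \<noteq> {}" by (auto simp: A_def)
  have AS: "A \<subseteq> S" by (auto simp: A_def)
  have fA: "finite A" using fS AS finite_subset by blast
  have le_Phi0: "\<And>j. j \<in> S \<Longrightarrow> f j xk \<le> Phi0" unfolding Phi0_def Phi_def' using fS by auto
  have cont: "((\<lambda>t. f j (xk + t *\<^sub>R p)) \<longlongrightarrow> f j xk) (at_right 0)" if "j \<in> S" for j
  proof -
    have "isCont (f j) (xk + 0 *\<^sub>R p)"
      using grad[of j] that by (intro has_derivative_continuous) (auto simp: S_def gderiv_def)
    moreover have "((\<lambda>t. xk + t *\<^sub>R p) \<longlongrightarrow> xk + 0 *\<^sub>R p) (at_right 0)"
      by (intro tendsto_intros)
    ultimately show ?thesis using isCont_tendsto_compose by fastforce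
  qed
  obtain i0 where i0: "i0 \<in> A" using neA by blast
  have ev1: "\<forall>\<^sub>F t in at_right 0. \<forall>j\<in>S - A. f j (xk + t *\<^sub>R p) \<le> f i0 (xk + t *\<^sub>R p)"
  proof (rule eventually_ball_finite)
    show "finite (S - A)" using fS by simp
    show "\<forall>j\<in>S - A. \<forall>\<^sub>F t in at_right 0. f j (xk + t *\<^sub>R p) \<le> f i0 (xk + t *\<^sub>R p)"
    proof
      fix j assume j: "j \<in> S - A"
      have "f j xk < f i0 xk" using j i0 le_Phi0[of j] by (auto simp: A_def)
      moreover have "((\<lambda>t. f i0 (xk + t *\<^sub>R p) - f j (xk + t *\<^sub>R p)) \<longlongrightarrow> f i0 xk - f j xk) (at_right 0)"
        using j i0 AS by (intro tendsto_diff cont) auto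
      ultimately have "\<forall>\<^sub>F t in at_right 0. 0 < f i0 (xk + t *\<^sub>R p) - f j (xk + t *\<^sub>R p)"
        by (intro order_tendstoD(1)) auto
      then show "\<forall>\<^sub>F t in at_right 0. f j (xk + t *\<^sub>R p) \<le> f i0 (xk + t *\<^sub>R p)"
        by eventually_elim auto
    qed
  qed
  have ev2: "\<forall>\<^sub>F t in at_right 0. (0::real) < t" by (simp add: eventually_at_right_less)
  define L where "L = Max ((\<lambda>j. p \<bullet> df j xk) ` A)"
  have lim1: "((\<lambda>t. Max ((\<lambda>j. (f j (xk + t *\<^sub>R p) - f j xk) / t) ` A)) \<longlongrightarrow> L) (at_right 0)"
    unfolding L_def using fA neA AS
    by (intro tendsto_Max_finite line_deriv grad) (auto simp: S_def)
  have ev3: "\<forall>\<^sub>F t in at_right 0. Max ((\<lambda>j. (f j (xk + t *\<^sub>R p) - f j xk) / t) ` A)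
      = (max_fun N f (xk + t *\<^sub>R p) - max_fun N f xk) / t"
    using ev1 ev2
  proof eventually_elim
    case (elim t)
    have "max_fun N f (xk + t *\<^sub>R p) = Max ((\<lambda>j. f j (xk + t *\<^sub>R p)) ` A)"
      unfolding Phi_def' using fS AS neA elim(1) i0 by (intro Max_restrict) auto
    moreover have "(\<lambda>j. (f j (xk + t *\<^sub>R p) - f j xk) / t) ` A = (\<lambda>j. (f j (xk + t *\<^sub>R p) - Phi0) / t) ` A"
      by (auto simp: A_def)
    ultimately show ?case using Max_shift_div[OF fA neA elim(2)] by (simp add: Phi0_def)
  qed
  have lim: "((\<lambda>t. (max_fun N f (xk + t *\<^sub>R p) - max_fun N f xk) / t) \<longlongrightarrow> L) (at_right 0)"
    using tendsto_cong[OF ev3] lim1 by simp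
  have FPhi: "F \<le> Phi0"
  proof -
    have "F \<le> (\<Sum>i=1..N. Phi0 * lam i)"
      unfolding F_def using lam_feas le_Phi0
      by (intro sum_mono mult_right_mono) (auto simp: simplex_feasible_def S_def)
    also have "\<dots> = Phi0" using lam_feas by (simp add: sum_distrib_left[symmetric] simplex_feasible_def)
    finally show ?thesis .
  qed
  have bnd: "p \<bullet> df j xk \<le> - (1/2) * (norm p)^2" if j: "j \<in> A" for j
  proof -
    have k: "v \<bullet> g j - v \<bullet> v - f j xk + F \<ge> 0"
      using kkt_ineq[of N lam g "\<lambda>j. f j xk" j] lam_feas lam_opt j AS
      by (auto simp: v_def F_def g_def S_def)
    have "f j xk = Phi0" using j by (simp add: A_def)
    moreover have "norm p ^ 2 = v \<bullet> v" by (simp add: p_def power2_norm_eq_inner)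
    moreover have "p \<bullet> df j xk = - (v \<bullet> g j)" by (simp add: p_def g_def)
    moreover have "v \<bullet> v \<ge> 0" by simp
    ultimately show ?thesis using k FPhi by linarith
  qed
  have "L \<le> - (1/2) * (norm p)^2"
    unfolding L_def using fA neA bnd by (subst Max_le_iff) auto
  then show ?thesis using lim by (auto simp: Let_def p_def v_def g_def)
qed

end
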